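(* Let $n\ge2$. For all $x,y\in\mathbb{H}^n$, $$\tfrac14\rho_{\mathbb{H}^n}(x,y)\le\tilde\tau_{\mathbb{H}^n}(x,y)\le\rho_{\mathbb{H}^n}(x,y)\quad\text{and}\quad \tilde\tau_{\mathbb{H}^n}(x,y)\le\tfrac12\rho_{\mathbb{H}^n}(x,y)+\log\tfrac54,$$ and all these inequalities are sharp: $$\inf_{x\ne y}\frac{\tilde\tau_{\mathbb{H}^n}(x,y)}{\rho_{\mathbb{H}^n}(x,y)}=\tfrac14,\qquad \sup_{x\ne y}\frac{\tilde\tau_{\mathbb{H}^n}(x,y)}{\rho_{\mathbb{H}^n}(x,y)}=1,$$ and equality $\tilde\tau_{\mathbb{H}^n}(x,y)=\tfrac12\rho_{\mathbb{H}^n}(x,y)+\log\tfrac54$ holds for $x=2e_n$, $y=\tfrac12e_n$.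
   Context: $\mathbb{H}^n=\{(x_1,\dots,x_n)\in\mathbb{R}^n:x_n>0\}$ with boundary $\{x_n=0\}$ in $\mathbb{R}^n$; $e_n$ is the $n$-th standard basis vector. The hyperbolic metric $\rho_{\mathbb{H}^n}$ is given by $\cosh\rho_{\mathbb{H}^n}(x,y)=1+\frac{|x-y|^2}{2x_ny_n}$. For a proper subdomain $D\subsetneq\mathbb{R}^n$ and $x,y\in D$, $\tilde\tau_D(x,y)=\log\big(1+\sup_{p\in\partial D}\frac{|x-y|}{\sqrt{|x-p||y-p|}}\big)$ (the scale invariant Cassinian metric). *)

theory Defs
  imports "HOL-Analysis.Analysis"
begin

text \<open>Upper half-space of real^'n with respect to a distinguished coordinate k
 (playing the role of the n-th coordinate x_n).\<close>
definition upper_half :: "'n::finite \<Rightarrow> (real^'n) set" where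
  "upper_half k = {x. x $ k > 0}"

definition hyp_dist :: "'n::finite \<Rightarrow> real^'n \<Rightarrow> real^'n \<Rightarrow> real" where
  "hyp_dist k x y = arcosh (1 + (norm (x - y))^2 / (2 * (x $ k) * (y $ k)))"

definition cassinian_si :: "(real^'n) set \<Rightarrow> real^'n \<Rightarrow> real^'n \<Rightarrow> real" where
  "cassinian_si D x y =
     ln (1 + (SUP p\<in>frontier D. dist x y / sqrt (dist x p * dist y p)))"

end

theory Submission
  imports Defs "HOL-Real_Asymp.Real_Asymp"
begin

lemma axis_scale: "axis k (c::real) = c *\<^sub>R axis k 1"
  by (simp add: axis_def vec_eq_iff)

lemma norm_axis_real: "norm (axis k (c::real)) = \<bar>c\<bar>"
  by (subst axis_scale) simp

lemma frontier_uh: "frontier (upper_half k) = {x::real^'n. x $ k = 0}"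
proof -
  have "upper_half k = {x::real^'n. axis k 1 \<bullet> x > 0}"
    by (simp add: upper_half_def inner_axis')
  moreover have "{x::real^'n. axis k 1 \<bullet> x = 0} = {x. x $ k = 0}"
    by (simp add: inner_axis')
  ultimately show ?thesis
    using frontier_halfspace_gt[of "axis k (1::real)" 0] by simp
qed

lemma hyp_formula:
  assumes "x $ k > 0" "y $ k > 0"
  shows "hyp_dist k x y = 2 * ln (sqrt (1 + (dist x y / sqrt (x$k * y$k))^2/4)
            + (dist x y / sqrt (x$k * y$k))/2)"
proof -
  define a where "a = x$k"
  define b where "b = y$k"
  define d where "d = dist x y"
  define u where "u = d / sqrt (a*b)"
  define w where "w = sqrt (1 + u^2/4)"
  have ab: "a > 0" "b > 0" using assms a_def b_def by auto
  have u0: "u \<ge> 0" using ab by (simp add: u_def d_def)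
  have u2: "u^2 = d^2/(a*b)" using ab by (simp add: u_def power_divide)
  have X: "1 + (norm (x - y))^2 / (2 * (x $ k) * (y $ k)) = 1 + u^2/2"
    by (simp add: u2 a_def[symmetric] b_def[symmetric] d_def dist_norm)
  have w2: "w^2 = 1 + u^2/4" unfolding w_def by (simp add: add_nonneg_nonneg)
  have w0: "w \<ge> 0" unfolding w_def by simp
  have sq: "sqrt ((1 + u^2/2)^2 - 1) = u * w"
  proof -
    have "(1 + u^2/2)^2 - 1 = (u*w)^2" using w2 by (simp add: power_mult_distrib algebra_simps power2_eq_square)
    thus ?thesis using u0 w0 by simp
  qed
  have e: "1 + u^2/2 + u*w = (w + u/2)^2" using w2 by (simp add: algebra_simps power2_eq_square)
  have w1: "w \<ge> 1" unfolding w_def by (rule real_le_rsqrt) simp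
  have pos: "w + u/2 > 0" using w1 u0 by linarith
  have "hyp_dist k x y = ln ((w + u/2)^2)"
    unfolding hyp_dist_def X
    by (subst arcosh_real_def) (use u0 in \<open>simp_all add: sq e\<close>)
  also have "\<dots> = 2 * ln (w + u/2)" using pos by (simp add: ln_realpow)
  finally show ?thesis by (simp add: w_def u_def d_def a_def b_def)
qed

lemma dist_ge_k:
  fixes x p :: "real^'n"
  assumes "p $ k = 0"
  shows "dist x p \<ge> \<bar>x $ k\<bar>"
proof -
  have "\<bar>(x - p) $ k\<bar> \<le> norm (x - p)" by (rule component_le_norm_cart)
  thus ?thesis using assms by (simp add: dist_norm)
qed

lemma F_le_u:
  fixes x y p :: "real^'n"
  assumes "x $ k > 0" "y $ k > 0" "p \<in> frontier (upper_half k)"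
  shows "dist x y / sqrt (dist x p * dist y p) \<le> dist x y / sqrt (x$k * y$k)"
proof -
  have pk: "p $ k = 0" using assms(3) by (simp add: frontier_uh)
  have 1: "dist x p \<ge> x$k" using dist_ge_k[OF pk, of x] assms by simp
  have 2: "dist y p \<ge> y$k" using dist_ge_k[OF pk, of y] assms by simp
  have "x$k * y$k \<le> dist x p * dist y p"
    using 1 2 assms by (intro mult_mono) auto
  hence "sqrt (x$k * y$k) \<le> sqrt (dist x p * dist y p)" by simp
  moreover have "sqrt (x$k * y$k) > 0" using assms by simp
  ultimately show ?thesis by (intro divide_left_mono) auto
qed

lemma zero_front: "(0::real^'n) \<in> frontier (upper_half k)"
  by (simp add: frontier_uh)

lemma bdd_F:
  fixes x y :: "real^'n"
  assumes "x $ k > 0" "y $ k > 0"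
  shows "bdd_above ((\<lambda>p. dist x y / sqrt (dist x p * dist y p)) ` frontier (upper_half k))"
  using F_le_u[OF assms] by (intro bdd_aboveI2) blast

lemma S_le:
  fixes x y :: "real^'n"
  assumes "x $ k > 0" "y $ k > 0"
  shows "(SUP p\<in>frontier (upper_half k). dist x y / sqrt (dist x p * dist y p))
           \<le> dist x y / sqrt (x$k * y$k)"
  using F_le_u[OF assms] zero_front by (intro cSUP_least) auto

lemma S_ge:
  fixes x y p :: "real^'n"
  assumes "x $ k > 0" "y $ k > 0" "p \<in> frontier (upper_half k)"
  shows "dist x y / sqrt (dist x p * dist y p) \<le>
     (SUP p\<in>frontier (upper_half k). dist x y / sqrt (dist x p * dist y p))"
  using bdd_F[OF assms(1,2)] assms(3) by (rule cSUP_upper2) simp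

lemma key_real:
  fixes a b c d :: real
  assumes a: "0 < a" and ab: "a \<le> b" and dd: "(b-a)^2 \<le> d^2" and d: "d \<ge> 0"
    and c: "c \<ge> 0" and c2: "c^2 = d^2 + 2*a*b - a^2"
  shows "1 + d / sqrt (a*b) \<le> (1 + d / sqrt (a*c))^2"
proof -
  define A where "A = sqrt a"
  define B where "B = sqrt b"
  define C where "C = sqrt c"
  have bc: "b \<le> c"
  proof -
    have "b^2 \<le> c^2" using c2 dd by (simp add: power2_eq_square algebra_simps)
    thus ?thesis using c by (simp add: power2_le_iff_abs_le)
  qed
  have cdb: "c \<le> d + b"
  proof -
    have e: "(d+b)^2 - c^2 = 2*d*b + (b-a)^2" unfolding c2 by (simp add: power2_eq_square algebra_simps)
    have "0 \<le> 2*d*b" using d a ab by simp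
    hence "c^2 \<le> (d+b)^2" using e by (smt (verit) zero_le_power2)
    thus ?thesis using c d a ab by (simp add: power2_le_iff_abs_le)
  qed
  have A0: "A > 0" using a A_def by simp
  have AB: "A \<le> B" using ab A_def B_def by simp
  have BC: "B \<le> C" using bc B_def C_def by simp
  have aA: "a = A^2" using a A_def by simp
  have bB: "b = B^2" using a ab B_def by simp
  have cC: "c = C^2" using c C_def by simp
  have B0: "B > 0" using A0 AB by linarith
  have C0: "C > 0" using B0 BC by linarith
  have sab: "sqrt (a*b) = A*B" by (simp add: A_def B_def real_sqrt_mult)
  have sac: "sqrt (a*c) = A*C" by (simp add: A_def C_def real_sqrt_mult)
  have i1: "C^2 \<le> d + B^2" using cdb bB cC by simp
  have i2: "A * C^2 \<le> B * d + A * B * C"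
  proof -
    have "A * C^2 \<le> A * (d + B^2)" using i1 A0 by simp
    also have "\<dots> = A*d + A*B*B" by (simp add: algebra_simps power2_eq_square)
    also have "\<dots> \<le> B*d + A*B*C"
    proof -
      have "A*d \<le> B*d" using AB d by (simp add: mult_right_mono)
      moreover have "A*B*B \<le> A*B*C" using BC A0 B0 by simp
      ultimately show ?thesis by linarith
    qed
    finally show ?thesis .
  qed
  have goal: "d/(A*B) \<le> 2*(d/(A*C)) + (d/(A*C))^2"
  proof -
    have "d * (A * C^2) \<le> d * (B*d + A*B*C)" using i2 d by (simp add: mult_left_mono)
    hence "d * A * C^2 \<le> 2 * d * A * B * C + d^2 * B"
    proof -
      have e: "d * (B*d + A*B*C) = d^2*B + d*A*B*C" by (simp add: power2_eq_square algebra_simps)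
      have "0 \<le> d*A*B*C" using d A0 B0 C0 by simp
      moreover have "d * A * C^2 = d * (A * C^2)" by simp
      ultimately show ?thesis using e \<open>d * (A * C^2) \<le> d * (B*d + A*B*C)\<close> by linarith
    qed
    hence "d * A * C^2 / (A^2 * B * C^2) \<le> (2 * d * A * B * C + d^2 * B) / (A^2 * B * C^2)"
      using A0 B0 C0 by (intro divide_right_mono) auto
    moreover have "d * A * C^2 / (A^2 * B * C^2) = d/(A*B)" using A0 B0 C0
      by (simp add: power2_eq_square)
    moreover have "(2 * d * A * B * C + d^2 * B) / (A^2 * B * C^2) = 2*(d/(A*C)) + (d/(A*C))^2"
      using A0 B0 C0 by (simp add: power2_eq_square field_simps)
    ultimately show ?thesis by simp
  qed
  show ?thesis unfolding sab sac using goal by (simp add: power2_eq_square algebra_simps)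
qed

definition Sxy :: "'n::finite \<Rightarrow> real^'n \<Rightarrow> real^'n \<Rightarrow> real" where
  "Sxy k x y = (SUP p\<in>frontier (upper_half k). dist x y / sqrt (dist x p * dist y p))"

lemma Sxy_sym: "Sxy k x y = Sxy k y x"
  unfolding Sxy_def by (simp add: dist_commute mult.commute)

lemma foot_le:
  fixes x y :: "real^'n"
  assumes "x $ k > 0" "y $ k > 0" "x $ k \<le> y $ k"
  shows "1 + dist x y / sqrt (x$k * y$k) \<le> (1 + Sxy k x y)^2"
proof -
  define a where "a = x$k"
  define b where "b = y$k"
  define d where "d = dist x y"
  define p where "p = x - a *\<^sub>R axis k 1"
  define c where "c = dist y p"
  have a0: "a > 0" using assms a_def by simp
  have pk: "p \<in> frontier (upper_half k)" by (simp add: frontier_uh p_def a_def)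
  have dxp: "dist x p = a" using a0 by (simp add: p_def dist_norm)
  have "c^2 = (norm ((y - x) + a *\<^sub>R axis k 1))^2"
    by (simp add: c_def p_def dist_norm algebra_simps)
  also have "\<dots> = (y-x)\<bullet>(y-x) + 2*a*((y-x)\<bullet>axis k 1) + a^2"
  proof -
    define v where "v = y - x"
    have "(norm (v + a *\<^sub>R axis k 1))^2 = (v + a *\<^sub>R axis k 1) \<bullet> (v + a *\<^sub>R axis k 1)"
      by (rule power2_norm_eq_inner)
    also have "\<dots> = v \<bullet> v + 2*a*(v \<bullet> axis k 1) + a^2"
      by (simp add: inner_add_left inner_add_right inner_axis inner_axis' power2_eq_square algebra_simps)
    finally show ?thesis by (simp add: v_def)
  qed
  also have "\<dots> = d^2 + 2*a*b - a^2"
  proof -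
    have h1: "(y-x)\<bullet>(y-x) = d^2" by (simp add: d_def dist_norm power2_norm_eq_inner[symmetric] norm_minus_commute)
    have h2: "(y-x)\<bullet>axis k 1 = b - a" by (simp add: inner_axis a_def b_def)
    show ?thesis unfolding h1 h2 by (simp add: algebra_simps power2_eq_square)
  qed
  finally have c2: "c^2 = d^2 + 2*a*b - a^2" .
  have "\<bar>(y-x)$k\<bar> \<le> norm (y-x)" by (rule component_le_norm_cart)
  hence "\<bar>b - a\<bar> \<le> d" by (simp add: a_def b_def d_def dist_norm norm_minus_commute)
  hence dd: "(b-a)^2 \<le> d^2" by (metis abs_ge_zero power2_abs power_mono)
  have key: "1 + d / sqrt (a*b) \<le> (1 + d / sqrt (a*c))^2"
    by (rule key_real) (use a0 assms dd c2 in \<open>auto simp: a_def b_def d_def c_def\<close>)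
  have Fp: "d / sqrt (a*c) \<le> Sxy k x y"
    using S_ge[OF assms(1,2) pk] unfolding Sxy_def by (simp add: dxp d_def c_def)
  have "0 \<le> d / sqrt (a*c)" using a0 by (simp add: d_def c_def)
  hence "(1 + d / sqrt (a*c))^2 \<le> (1 + Sxy k x y)^2" using Fp by (intro power_mono) auto
  with key show ?thesis by (simp add: a_def b_def d_def)
qed

lemma foot:
  fixes x y :: "real^'n"
  assumes "x $ k > 0" "y $ k > 0"
  shows "1 + dist x y / sqrt (x$k * y$k) \<le> (1 + Sxy k x y)^2"
proof (cases "x $ k \<le> y $ k")
  case True thus ?thesis using foot_le assms by blast
next
  case False
  hence "y $ k \<le> x $ k" by simp
  hence "1 + dist y x / sqrt (y$k * x$k) \<le> (1 + Sxy k y x)^2" by (rule foot_le[OF assms(2) assms(1)])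
  thus ?thesis by (simp add: Sxy_sym dist_commute mult.commute)
qed

lemma Sxy_le: "x $ k > 0 \<Longrightarrow> y $ k > 0 \<Longrightarrow> Sxy k x y \<le> dist x y / sqrt (x$k * y$k)"
  unfolding Sxy_def by (rule S_le)

lemma Sxy_ge0:
  assumes "x $ k > 0" "y $ k > 0" shows "Sxy k x y \<ge> 0"
proof -
  have "0 \<le> dist x y / sqrt (dist x 0 * dist y 0)" by simp
  also have "\<dots> \<le> Sxy k x y" unfolding Sxy_def by (rule S_ge[OF assms zero_front])
  finally show ?thesis .
qed

lemma cas_eq: "cassinian_si (upper_half k) x y = ln (1 + Sxy k x y)"
  unfolding cassinian_si_def Sxy_def ..

lemma lnmono: "0 < (a::real) \<Longrightarrow> a \<le> b \<Longrightarrow> ln a \<le> ln b" by simp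

lemma pair_bounds:
  fixes x y :: "real^'n"
  assumes "x $ k > 0" "y $ k > 0"
  shows "hyp_dist k x y / 4 \<le> cassinian_si (upper_half k) x y
          \<and> cassinian_si (upper_half k) x y \<le> hyp_dist k x y
          \<and> cassinian_si (upper_half k) x y \<le> hyp_dist k x y / 2 + ln (5/4)"
proof -
  define u where "u = dist x y / sqrt (x$k * y$k)"
  define w where "w = sqrt (1 + u^2/4)"
  define S where "S = Sxy k x y"
  have u0: "u \<ge> 0" using assms by (simp add: u_def)
  have w1: "w \<ge> 1" unfolding w_def by (rule real_le_rsqrt) simp
  have w0: "w \<ge> 0" using w1 by simp
  have w2: "w^2 = 1 + u^2/4" unfolding w_def by (simp add: add_nonneg_nonneg)
  have wle: "w \<le> 1 + u/2" unfolding w_def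
  proof -
    have "1 + u^2/4 \<le> (1+u/2)^2" using u0 by (simp add: power2_eq_square algebra_simps)
    hence "sqrt (1 + u^2/4) \<le> sqrt ((1+u/2)^2)" by (rule real_sqrt_le_mono)
    also have "\<dots> = 1+u/2" using u0 by simp
    finally show "sqrt (1 + u^2/4) \<le> 1+u/2" .
  qed
  define W where "W = w + u/2"
  have W1: "W \<ge> 1" using w1 u0 W_def by simp
  have hyp: "hyp_dist k x y = 2 * ln W" unfolding W_def w_def u_def using hyp_formula[OF assms] .
  have cas: "cassinian_si (upper_half k) x y = ln (1 + S)" unfolding S_def by (rule cas_eq)
  have S0: "S \<ge> 0" using Sxy_ge0[OF assms] S_def by simp
  have Su: "S \<le> u" using Sxy_le[OF assms] S_def u_def by simp
  have ft: "1 + u \<le> (1 + S)^2" using foot[OF assms] S_def u_def by simp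
  have i1: "ln W / 2 \<le> ln (1 + S)"
  proof -
    have "W \<le> (1+S)^2" using wle ft W_def by simp
    hence "ln W \<le> ln ((1+S)^2)" using W1 by (intro lnmono) auto
    also have "\<dots> = 2 * ln (1+S)" using S0 by (simp add: ln_realpow)
    finally show ?thesis by simp
  qed
  have i2: "ln (1 + S) \<le> 2 * ln W"
  proof -
    have "(1 + u/2)^2 \<le> W^2" using w1 u0 W_def by (intro power_mono) auto
    moreover have "1 + u \<le> (1 + u/2)^2" by (simp add: power2_eq_square algebra_simps)
    ultimately have "1 + S \<le> W^2" using Su by linarith
    hence "ln (1+S) \<le> ln (W^2)" using S0 by (intro lnmono) auto
    also have "\<dots> = 2 * ln W" using W1 by (simp add: ln_realpow)
    finally show ?thesis .
  qed
  have i3: "ln (1 + S) \<le> ln W + ln (5/4)"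
  proof -
    have "(1 + 3*u/8)^2 \<le> (25/16) * (1 + u^2/4)"
    proof -
      have "(25/16) * (1 + u^2/4) - (1 + 3*u/8)^2 = (u/2 - 3/4)^2"
        by (simp add: power2_eq_square algebra_simps)
      thus ?thesis by (smt (verit) zero_le_power2)
    qed
    hence "1 + 3*u/8 \<le> sqrt ((25/16) * (1 + u^2/4))" by (rule real_le_rsqrt)
    also have "\<dots> = 5/4 * w"
    proof -
      have q: "sqrt (25/16) = (5/4::real)" by (rule real_sqrt_unique) (simp_all add: power2_eq_square)
      show ?thesis unfolding real_sqrt_mult q w_def ..
    qed
    finally have "1 + S \<le> 5/4 * W" using Su W_def by simp
    hence "ln (1+S) \<le> ln (5/4 * W)" using S0 by (intro lnmono) auto
    also have "\<dots> = ln W + ln (5/4)" using W1 ln_mult[of "5/4" W] by (simp add: mult.commute)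
    finally show ?thesis .
  qed
  show ?thesis using i1 i2 i3 unfolding hyp cas by simp
qed

lemma hyp_pos:
  fixes x y :: "real^'n"
  assumes "x $ k > 0" "y $ k > 0" "x \<noteq> y"
  shows "hyp_dist k x y > 0"
proof -
  define u where "u = dist x y / sqrt (x$k * y$k)"
  have u0: "u > 0" using assms by (simp add: u_def)
  have w1: "sqrt (1 + u^2/4) \<ge> 1" by (rule real_le_rsqrt) simp
  have "sqrt (1 + u^2/4) + u/2 > 1" using w1 u0 by linarith
  hence "ln (sqrt (1 + u^2/4) + u/2) > 0" by simp
  thus ?thesis using hyp_formula[OF assms(1,2)] u_def by simp
qed

lemma ratio_bounds:
  fixes x y :: "real^'n"
  assumes "x $ k > 0" "y $ k > 0" "x \<noteq> y"
  shows "1/4 \<le> cassinian_si (upper_half k) x y / hyp_dist k x y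
       \<and> cassinian_si (upper_half k) x y / hyp_dist k x y \<le> 1"
proof -
  have h: "hyp_dist k x y > 0" by (rule hyp_pos[OF assms])
  show ?thesis using pair_bounds[OF assms(1,2)] h
    by (simp add: le_divide_eq divide_le_eq)
qed

lemma axis_other: "j \<noteq> k \<Longrightarrow> axis j (s::real) $ k = 0"
  by (simp add: axis_def)

lemma horiz:
  fixes j k :: "'n::finite" and s :: real
  assumes jk: "j \<noteq> k" and s2: "s \<ge> 2"
  defines "x \<equiv> axis k (1::real)" and "y \<equiv> axis k 1 + axis j s"
  shows "x $ k > 0" "y $ k > 0" "x \<noteq> y"
    "cassinian_si (upper_half k) x y / hyp_dist k x y \<le> ln (1 + 2 * sqrt s) / (2 * ln s)"
proof -
  show xk: "x $ k > 0" by (simp add: x_def)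
  show yk: "y $ k > 0" using jk by (simp add: y_def axis_other)
  have yk1: "y $ k = 1" using jk by (simp add: y_def axis_other)
  have dxy: "dist x y = s" using s2 by (simp add: x_def y_def dist_norm norm_minus_commute norm_axis_real)
  show "x \<noteq> y" using dxy s2 by auto
  have hyp: "hyp_dist k x y = 2 * ln (sqrt (1 + s^2/4) + s/2)"
    using hyp_formula[OF xk yk] dxy yk1 by (simp add: x_def)
  have "s/2 \<le> sqrt (1 + s^2/4)" by (rule real_le_rsqrt) (simp add: power_divide)
  hence "s \<le> sqrt (1 + s^2/4) + s/2" by linarith
  hence "ln s \<le> ln (sqrt (1 + s^2/4) + s/2)" using s2 by (intro lnmono) auto
  hence hge: "2 * ln s \<le> hyp_dist k x y" using hyp by simp
  have lns: "0 < 2 * ln s" using s2 by simp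
  have Sle: "Sxy k x y \<le> 2 * sqrt s"
    unfolding Sxy_def
  proof (rule cSUP_least)
    show "frontier (upper_half k) \<noteq> {}" using zero_front by blast
  next
    fix p :: "real^'n" assume p: "p \<in> frontier (upper_half k)"
    have pk: "p $ k = 0" using p by (simp add: frontier_uh)
    have 1: "dist x p \<ge> 1" using dist_ge_k[OF pk, of x] by (simp add: x_def)
    have 2: "dist y p \<ge> 1" using dist_ge_k[OF pk, of y] yk1 by simp
    have 3: "s \<le> dist x p + dist y p" using dist_triangle[of x y p] dxy by (simp add: dist_commute)
    have prod: "s/2 \<le> dist x p * dist y p"
    proof (cases "dist x p \<ge> s/2")
      case True
      hence "s/2 * 1 \<le> dist x p * dist y p" using 2 s2 by (intro mult_mono) auto
      thus ?thesis by simp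
    next
      case False
      hence "dist y p \<ge> s/2" using 3 by linarith
      hence "1 * (s/2) \<le> dist x p * dist y p" using 1 s2 by (intro mult_mono) auto
      thus ?thesis by simp
    qed
    define P where "P = dist x p * dist y p"
    have P0: "P > 0" using prod s2 P_def by linarith
    have "(s / sqrt P)^2 = s^2 / P" using P0 by (simp add: power_divide)
    also have "\<dots> \<le> s^2 / (s/2)" using prod P_def s2 by (intro divide_left_mono) auto
    also have "\<dots> = 2 * s" using s2 by (simp add: power2_eq_square)
    also have "\<dots> \<le> (2 * sqrt s)^2" using s2 by (simp add: power_mult_distrib)
    finally have "(s / sqrt P)^2 \<le> (2 * sqrt s)^2" .
    hence "s / sqrt P \<le> 2 * sqrt s" by (rule power2_le_imp_le) (use s2 in auto)
    thus "dist x y / sqrt (dist x p * dist y p) \<le> 2 * sqrt s" using dxy P_def by simp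
  qed
  have S0: "Sxy k x y \<ge> 0" by (rule Sxy_ge0[OF xk yk])
  have cle: "cassinian_si (upper_half k) x y \<le> ln (1 + 2 * sqrt s)"
    unfolding cas_eq using S0 Sle by (intro lnmono) auto
  have c0: "cassinian_si (upper_half k) x y \<ge> 0" unfolding cas_eq using S0 by simp
  show "cassinian_si (upper_half k) x y / hyp_dist k x y \<le> ln (1 + 2 * sqrt s) / (2 * ln s)"
    using cle c0 hge lns by (intro frac_le) auto
qed

lemma vert:
  fixes k :: "'n::finite" and t :: real
  assumes t1: "t > 1"
  defines "x \<equiv> axis k (1::real)" and "y \<equiv> axis k t"
  shows "x $ k > 0" "y $ k > 0" "x \<noteq> y"
    "ln (1 + (t-1)/sqrt t) / (2 * ln (sqrt (1 + ((t-1)/sqrt t)^2/4) + (t-1)/sqrt t/2))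
       \<le> cassinian_si (upper_half k) x y / hyp_dist k x y"
proof -
  show xk: "x $ k > 0" by (simp add: x_def)
  show yk: "y $ k > 0" using t1 by (simp add: y_def)
  have dxy: "dist x y = t - 1"
  proof -
    have "x - y = axis k (1 - t)" by (simp add: x_def y_def axis_def vec_eq_iff)
    thus ?thesis using t1 by (simp add: dist_norm norm_axis_real)
  qed
  show xy: "x \<noteq> y" using dxy t1 by auto
  have hyp: "hyp_dist k x y = 2 * ln (sqrt (1 + ((t-1)/sqrt t)^2/4) + (t-1)/sqrt t/2)"
    using hyp_formula[OF xk yk] dxy by (simp add: x_def y_def)
  have hp: "hyp_dist k x y > 0" by (rule hyp_pos[OF xk yk xy])
  have "dist x y / sqrt (dist x 0 * dist y 0) \<le> Sxy k x y"
    unfolding Sxy_def by (rule S_ge[OF xk yk zero_front])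
  hence Sge: "(t-1)/sqrt t \<le> Sxy k x y" using dxy t1 by (simp add: x_def y_def norm_axis_real)
  have "0 \<le> (t-1)/sqrt t" using t1 by simp
  hence "ln (1 + (t-1)/sqrt t) \<le> cassinian_si (upper_half k) x y"
    unfolding cas_eq using Sge by (intro lnmono) auto
  thus "ln (1 + (t-1)/sqrt t) / (2 * ln (sqrt (1 + ((t-1)/sqrt t)^2/4) + (t-1)/sqrt t/2))
       \<le> cassinian_si (upper_half k) x y / hyp_dist k x y"
    using hp unfolding hyp by (intro divide_right_mono) auto
qed

lemma lim1: "((\<lambda>s::real. ln (1 + 2 * sqrt s) / (2 * ln s)) \<longlongrightarrow> 1/4) at_top"
  by real_asymp

lemma lim2: "((\<lambda>t::real. ln (1 + (t-1)/sqrt t) / (2 * ln (sqrt (1 + ((t-1)/sqrt t)^2/4) + (t-1)/sqrt t/2))) \<longlongrightarrow> 1) (at_right 1)"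
  by real_asymp

theorem theorem4p2:
  fixes k :: "'n::finite"
  assumes "CARD('n) \<ge> 2"
  shows "(\<forall>x\<in>upper_half k. \<forall>y\<in>upper_half k.
            hyp_dist k x y / 4 \<le> cassinian_si (upper_half k) x y
          \<and> cassinian_si (upper_half k) x y \<le> hyp_dist k x y
          \<and> cassinian_si (upper_half k) x y \<le> hyp_dist k x y / 2 + ln (5/4))
       \<and> (INF (x, y)\<in>{(x, y). x \<in> upper_half k \<and> y \<in> upper_half k \<and> x \<noteq> y}.
            cassinian_si (upper_half k) x y / hyp_dist k x y) = 1/4
       \<and> (SUP (x, y)\<in>{(x, y). x \<in> upper_half k \<and> y \<in> upper_half k \<and> x \<noteq> y}.
            cassinian_si (upper_half k) x y / hyp_dist k x y) = 1
       \<and> cassinian_si (upper_half k) (axis k 2) (axis k (1/2))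
           = hyp_dist k (axis k 2) (axis k (1/2)) / 2 + ln (5/4)"
proof -
  have "\<exists>j::'n. j \<noteq> k"
  proof (rule ccontr)
    assume "\<not> (\<exists>j::'n. j \<noteq> k)"
    hence "(UNIV::'n set) = {k}" by auto
    hence "CARD('n) = 1" by (auto simp: card_1_singleton_iff)
    thus False using assms by simp
  qed
  then obtain j :: 'n where jk: "j \<noteq> k" by blast
  define A where "A = {(x, y). x \<in> upper_half k \<and> y \<in> upper_half k \<and> (x::real^'n) \<noteq> y}"
  define f where "f = (\<lambda>(x, y). cassinian_si (upper_half k) x y / hyp_dist k (x::real^'n) y)"
  have P1: "\<forall>x\<in>upper_half k. \<forall>y\<in>upper_half k.
            hyp_dist k x y / 4 \<le> cassinian_si (upper_half k) x y
          \<and> cassinian_si (upper_half k) x y \<le> hyp_dist k x y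
          \<and> cassinian_si (upper_half k) x y \<le> hyp_dist k x y / 2 + ln (5/4)"
    using pair_bounds by (auto simp: upper_half_def)
  have rb: "\<And>z. z \<in> f ` A \<Longrightarrow> 1/4 \<le> z \<and> z \<le> 1"
    using ratio_bounds by (auto simp: A_def f_def upper_half_def)
  have memA: "\<And>x y. x $ k > 0 \<Longrightarrow> y $ k > 0 \<Longrightarrow> x \<noteq> y \<Longrightarrow> f (x, y) \<in> f ` A"
    by (auto simp: A_def upper_half_def)
  have ne: "f ` A \<noteq> {}"
    using memA[OF horiz(1-3)[OF jk, of 2]] by auto
  have INF: "Inf (f ` A) = 1/4"
  proof (rule cInf_eq_non_empty[OF ne])
    fix z assume "z \<in> f ` A" thus "1/4 \<le> z" using rb by blast
  next
    fix l assume lb: "\<And>z. z \<in> f ` A \<Longrightarrow> l \<le> z"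
    show "l \<le> 1/4"
    proof (rule ccontr)
      assume "\<not> l \<le> 1/4"
      hence "l > 1/4" by simp
      hence "eventually (\<lambda>s. ln (1 + 2 * sqrt s) / (2 * ln s) < l) at_top"
        using lim1 by (rule order_tendstoD(2)[rotated])
      then obtain N where N: "\<And>s. s \<ge> N \<Longrightarrow> ln (1 + 2 * sqrt s) / (2 * ln s) < l"
        by (auto simp: eventually_at_top_linorder)
      define s where "s = max N 2"
      have s2: "s \<ge> 2" by (simp add: s_def)
      note h = horiz[OF jk s2]
      have "l \<le> f (axis k 1, axis k 1 + axis j s)" by (rule lb[OF memA[OF h(1-3)]])
      also have "\<dots> \<le> ln (1 + 2 * sqrt s) / (2 * ln s)" using h(4) by (simp add: f_def)
      also have "\<dots> < l" by (rule N) (simp add: s_def)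
      finally show False by simp
    qed
  qed
  have SUP: "Sup (f ` A) = 1"
  proof (rule cSup_eq_non_empty[OF ne])
    fix z assume "z \<in> f ` A" thus "z \<le> 1" using rb by blast
  next
    fix l assume ub: "\<And>z. z \<in> f ` A \<Longrightarrow> z \<le> l"
    show "1 \<le> l"
    proof (rule ccontr)
      assume "\<not> 1 \<le> l"
      hence "l < 1" by simp
      hence "eventually (\<lambda>t. l < ln (1 + (t-1)/sqrt t) / (2 * ln (sqrt (1 + ((t-1)/sqrt t)^2/4) + (t-1)/sqrt t/2))) (at_right 1)"
        using lim2 by (rule order_tendstoD(1)[rotated])
      then obtain b where b: "b > 1" and B: "\<And>t. t > 1 \<Longrightarrow> t < b \<Longrightarrow>
          l < ln (1 + (t-1)/sqrt t) / (2 * ln (sqrt (1 + ((t-1)/sqrt t)^2/4) + (t-1)/sqrt t/2))"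
        by (auto simp: eventually_at_right_field)
      define t where "t = (1 + b) / 2"
      have t1: "t > 1" and tb: "t < b" using b by (auto simp: t_def)
      note h = vert[OF t1, of k]
      have "l < ln (1 + (t-1)/sqrt t) / (2 * ln (sqrt (1 + ((t-1)/sqrt t)^2/4) + (t-1)/sqrt t/2))"
        by (rule B[OF t1 tb])
      also have "\<dots> \<le> f (axis k 1, axis k t)" using h(4) by (simp add: f_def)
      also have "\<dots> \<le> l" by (rule ub[OF memA[OF h(1-3)]])
      finally show False by simp
    qed
  qed
  have EQ: "cassinian_si (upper_half k) (axis k 2) (axis k (1/2))
           = hyp_dist k (axis k 2) (axis k (1/2)) / 2 + ln (5/4)"
  proof -
    define x :: "real^'n" where "x = axis k 2"
    define y :: "real^'n" where "y = axis k (1/2)"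
    have xk: "x $ k > 0" and yk: "y $ k > 0" by (simp_all add: x_def y_def)
    have dxy: "dist x y = 3/2"
    proof -
      have "x - y = axis k (3/2)" by (simp add: x_def y_def axis_def vec_eq_iff)
      thus ?thesis by (simp add: dist_norm norm_axis_real)
    qed
    have prod: "x $ k * y $ k = 1" by (simp add: x_def y_def)
    have q: "sqrt (25/16) = (5/4::real)" by (rule real_sqrt_unique) (simp_all add: power2_eq_square)
    have "hyp_dist k x y = 2 * ln (sqrt (1 + (3/2)^2/4) + (3/2)/2)"
      using hyp_formula[OF xk yk] unfolding dxy prod by simp
    also have "sqrt (1 + (3/2)^2/4) = (5/4::real)" using q by (simp add: power2_eq_square)
    finally have hyp: "hyp_dist k x y = 2 * ln 2" by simp
    have "Sxy k x y \<le> 3/2" using Sxy_le[OF xk yk] unfolding dxy prod by simp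
    moreover have "dist x y / sqrt (dist x 0 * dist y 0) \<le> Sxy k x y"
      unfolding Sxy_def by (rule S_ge[OF xk yk zero_front])
    moreover have "dist x y / sqrt (dist x 0 * dist y 0) = 3/2"
    proof -
      have d1: "dist x 0 = 2" "dist y 0 = 1/2" by (simp_all add: x_def y_def norm_axis_real)
      show ?thesis unfolding d1 dxy by simp
    qed
    ultimately have "Sxy k x y = 3/2" by linarith
    hence "cassinian_si (upper_half k) x y = ln (5/2)" unfolding cas_eq by simp
    moreover have "ln (5/2) = ln 2 + ln (5/4::real)" using ln_mult[of 2 "5/4"] by simp
    ultimately show ?thesis using hyp by (simp add: x_def y_def)
  qed
  show ?thesis
    using P1 INF SUP EQ unfolding A_def f_def by simp
qed

end
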